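(* For any positive integer $K$, there exist constants $0\le\alpha<\beta\le1$ and a family $\mathcal{D}=\{D_p\}_{p\in[\alpha,\beta]}$ of probability distributions supported on $\{-R,\dots,R\}$, where $R=O(K^2)$, such that: (1) for every $D_p\in\mathcal{D}$, $D_p(0)=p$ and $D_p(1)=\Omega(1)$; (2) for all $p\in[\alpha,\beta]$ and all $X\in[R]$, $D_p(X)=D_p(-X)$; (3) for all $p,q\in[\alpha,\beta]$, $\mathbb{E}_{X\sim D_p}[X^k]=\mathbb{E}_{X\sim D_q}[X^k]$ for all $k\in[K]$.
   Context: $[K]=\{1,\dots,K\}$; $D_p(i)$ denotes the probability that $D_p$ assigns to $i$. *)

theory Defs
  imports "HOL-Probability.Probability_Mass_Function"
begin

end

theory Submission
  imports Defs
begin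

lemma pascal_step:
  fixes f :: "nat \<Rightarrow> real"
  shows "(\<Sum>i\<le>Suc m. (-1)^i * real (Suc m choose i) * f i) =
         (\<Sum>i\<le>m. (-1)^i * real (m choose i) * (f i - f (Suc i)))"
proof -
  have "(\<Sum>i\<le>Suc m. (-1)^i * real (Suc m choose i) * f i) =
        f 0 + (\<Sum>i\<le>m. (-1)^(Suc i) * real (Suc m choose Suc i) * f (Suc i))"
    by (subst sum.atMost_Suc_shift) simp
  also have "\<dots> = f 0 + (\<Sum>i\<le>m. (-1)^(Suc i) * real (m choose i) * f (Suc i))
                 + (\<Sum>i\<le>m. (-1)^(Suc i) * real (m choose Suc i) * f (Suc i))"
    unfolding add.assoc sum.distrib[symmetric]
    by (intro arg_cong[where f="\<lambda>t. f 0 + t"] sum.cong refl) (simp add: algebra_simps)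
  also have "(\<Sum>i\<le>m. (-1)^(Suc i) * real (m choose Suc i) * f (Suc i))
      = (\<Sum>i\<le>Suc m. (-1)^i * real (m choose i) * f i) - f 0"
    by (subst sum.atMost_Suc_shift) simp
  also have "(\<Sum>i\<le>Suc m. (-1)^i * real (m choose i) * f i) = (\<Sum>i\<le>m. (-1)^i * real (m choose i) * f i)"
    by simp
  finally show ?thesis
    by (simp add: sum_subtractf algebra_simps sum_negf)
qed

lemma fd_zero:
  "k < m \<Longrightarrow> (\<Sum>i\<le>m. (-1)^i * real (m choose i) * (real i + a)^k) = 0"
proof (induction m arbitrary: k a)
  case 0
  then show ?case by simp
next
  case (Suc m)
  have bin: "(x + 1)^k - x^k = (\<Sum>l<k. real (k choose l) * x^l)" for x :: real
  proof -
    have "(x + 1)^k = (\<Sum>l\<le>k. real (k choose l) * x^l)"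
      using binomial_ring[of x 1 k] by simp
    also have "\<dots> = (\<Sum>l<k. real (k choose l) * x^l) + x^k"
      by (simp flip: lessThan_Suc_atMost)
    finally show ?thesis by simp
  qed
  have "(\<Sum>i\<le>Suc m. (-1)^i * real (Suc m choose i) * (real i + a)^k)
     = (\<Sum>i\<le>m. (-1)^i * real (m choose i) * ((real i + a)^k - (real (Suc i) + a)^k))"
    by (rule pascal_step)
  also have "\<dots> = - (\<Sum>i\<le>m. (-1)^i * real (m choose i) * (\<Sum>l<k. real (k choose l) * (real i + a)^l))"
    using bin[of "real _ + a"] by (simp add: sum_negf algebra_simps)
  also have "\<dots> = - (\<Sum>l<k. real (k choose l) * (\<Sum>i\<le>m. (-1)^i * real (m choose i) * (real i + a)^l))"
    unfolding sum_distrib_left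
    by (subst sum.swap) (simp add: algebra_simps)
  also have "\<dots> = 0"
  proof -
    have "\<And>l. l < k \<Longrightarrow> (\<Sum>i\<le>m. (-1)^i * real (m choose i) * (real i + a)^l) = 0"
      using Suc by auto
    then show ?thesis by simp
  qed
  finally show ?case .
qed

lemma reindex_sym:
  fixes g :: "int \<Rightarrow> real"
  shows "(\<Sum>x\<in>{- int n..int n}. g x) = (\<Sum>i\<le>2*n. g (int i - int n))"
  by (rule sum.reindex_bij_witness[where j="\<lambda>x. nat (x + int n)" and i="\<lambda>i. int i - int n"]) auto

definition pm1 :: "int \<Rightarrow> real" where
  "pm1 x = (if x = 1 then 1/4 else 0) + (if x = -1 then 1/4 else 0)"
definition bw :: "nat \<Rightarrow> int \<Rightarrow> real" where
  "bw n x = pm1 x + (if \<bar>x\<bar> \<le> int n then real (2*n choose nat (x + int n)) / (2 * 4^n) else 0)"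
definition nu :: "nat \<Rightarrow> int \<Rightarrow> real" where
  "nu n x = (if \<bar>x\<bar> \<le> int n then (-1)^nat (x + int n) * real (2*n choose nat (x + int n)) else 0)"
definition sc :: "nat \<Rightarrow> real \<Rightarrow> real" where
  "sc n p = (p - bw n 0) / nu n 0"
definition ww :: "nat \<Rightarrow> real \<Rightarrow> int \<Rightarrow> real" where
  "ww n p x = bw n x + sc n p * nu n x"

lemma nu_moment: "k < 2*n \<Longrightarrow> (\<Sum>x\<in>{- int n..int n}. nu n x * real_of_int x ^ k) = 0"
proof -
  assume k: "k < 2*n"
  have "(\<Sum>x\<in>{- int n..int n}. nu n x * real_of_int x ^ k)
     = (\<Sum>i\<le>2*n. (-1)^i * real (2*n choose i) * (real i + (- real n))^k)"
    unfolding reindex_sym by (intro sum.cong refl) (auto simp: nu_def)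
  also have "\<dots> = 0" using fd_zero[OF k] .
  finally show ?thesis .
qed

lemma delta_mult: "finite S \<Longrightarrow> a \<in> S \<Longrightarrow> (\<Sum>x\<in>S. (if x = a then c else 0) * f x) = c * (f a :: real)"
proof -
  assume "finite S" "a \<in> S"
  have "(\<Sum>x\<in>S. (if x = a then c else 0) * f x) = (\<Sum>x\<in>S. if x = a then c * f a else 0)"
    by (intro sum.cong) auto
  also have "\<dots> = c * f a" using \<open>finite S\<close> \<open>a \<in> S\<close> by simp
  finally show ?thesis .
qed

lemma pm1_sum: "n \<ge> 1 \<Longrightarrow> (\<Sum>x\<in>{- int n..int n}. pm1 x * f x) = (f 1 + f (-1)) / 4"
proof -
  assume "n \<ge> 1"
  have "(\<Sum>x\<in>{- int n..int n}. pm1 x * f x) = (\<Sum>x\<in>{- int n..int n}. (if x = 1 then 1/4 else 0) * f x)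
    + (\<Sum>x\<in>{- int n..int n}. (if x = -1 then 1/4 else 0) * f x)"
    unfolding pm1_def by (simp add: sum.distrib distrib_right)
  also have "\<dots> = (f 1 + f (-1)) / 4"
    using \<open>n \<ge> 1\<close> by (subst delta_mult, simp, simp)+ simp
  finally show ?thesis .
qed

lemma bw_sum: "n \<ge> 1 \<Longrightarrow> (\<Sum>x\<in>{- int n..int n}. bw n x) = 1"
proof -
  assume n: "n \<ge> 1"
  have "(\<Sum>x\<in>{- int n..int n}. bw n x) = (\<Sum>x\<in>{- int n..int n}. pm1 x * 1)
     + (\<Sum>x\<in>{- int n..int n}. real (2*n choose nat (x + int n)) / (2 * 4^n))"
    unfolding bw_def sum.distrib by (intro arg_cong2[where f="(+)"] sum.cong) auto
  also have "(\<Sum>x\<in>{- int n..int n}. real (2*n choose nat (x + int n)) / (2 * 4^n))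
      = (\<Sum>i\<le>2*n. real (2*n choose i)) / (2 * 4^n)"
    unfolding reindex_sym by (simp add: sum_divide_distrib)
  also have "(\<Sum>i\<le>2*n. real (2*n choose i)) = 2^(2*n)"
    using choose_row_sum[of "2*n"] by (metis of_nat_numeral of_nat_power of_nat_sum)
  also have "(2::real)^(2*n) = 4^n" by (simp add: power_mult)
  finally show ?thesis using pm1_sum[OF n, of "\<lambda>_. 1"] by simp
qed

lemma bw0: "bw n 0 = real (2*n choose n) / (2 * 4^n)"
  by (simp add: bw_def pm1_def)

lemma nu0: "nu n 0 = (-1)^n * real (2*n choose n)"
  by (simp add: nu_def)

lemma Cn_pos: "real (2*n choose n) > 0"
  by simp

lemma ww0: "ww n p 0 = p"
  using Cn_pos[of n] unfolding ww_def sc_def nu0 bw0 by (simp add: field_simps)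

lemma sc_bound:
  assumes "0 \<le> p" "p \<le> real (2*n choose n) / 4^n"
  shows "\<bar>sc n p\<bar> \<le> 1 / (2 * 4^n)"
proof -
  define C where "C = real (2*n choose n)"
  have C: "C > 0" unfolding C_def by simp
  have h: "p * 4^n \<le> C" "0 \<le> p * 4^n" using assms unfolding C_def[symmetric] by (auto simp: field_simps)
  have "\<bar>2 * (p * 4^n) - C\<bar> \<le> C" using h by (simp add: abs_le_iff)
  then have "\<bar>p - C / (2*4^n)\<bar> \<le> C / (2*4^n)" by (simp add: field_simps)
  then have "\<bar>p - C / (2*4^n)\<bar> / C \<le> 1 / (2*4^n)" using C by (simp add: field_simps)
  moreover have "\<bar>sc n p\<bar> = \<bar>p - C / (2*4^n)\<bar> / C"
    unfolding sc_def bw0 nu0 C_def[symmetric] using C by (simp add: abs_mult abs_divide)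
  ultimately show ?thesis by simp
qed

lemma ww_ge:
  assumes "0 \<le> p" "p \<le> real (2*n choose n) / 4^n"
  shows "pm1 x \<le> ww n p x"
proof (cases "\<bar>x\<bar> \<le> int n")
  case True
  define C where "C = real (2*n choose nat (x + int n))"
  have C: "C \<ge> 0" unfolding C_def by simp
  have "\<bar>sc n p * ((-1)^nat (x + int n) * C)\<bar> \<le> C / (2 * 4^n)"
  proof -
    have "\<bar>sc n p\<bar> * C \<le> 1 / (2 * 4^n) * C" using sc_bound[OF assms] C by (rule mult_right_mono)
    then show ?thesis using C by (simp add: abs_mult)
  qed
  then have "sc n p * ((-1)^nat (x + int n) * C) \<ge> - (C / (2 * 4^n))" by linarith
  then show ?thesis using True unfolding ww_def bw_def nu_def C_def[symmetric] by simp
next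
  case False
  then show ?thesis unfolding ww_def bw_def nu_def by simp
qed

lemma pm1_nonneg: "pm1 x \<ge> 0" by (simp add: pm1_def)

lemma ww_out: "n \<ge> 1 \<Longrightarrow> x \<notin> {- int n..int n} \<Longrightarrow> ww n p x = 0"
  by (auto simp: ww_def bw_def nu_def pm1_def)

lemma ww_sum: "n \<ge> 1 \<Longrightarrow> (\<Sum>x\<in>{- int n..int n}. ww n p x) = 1"
proof -
  assume n: "n \<ge> 1"
  have "(\<Sum>x\<in>{- int n..int n}. ww n p x) = (\<Sum>x\<in>{- int n..int n}. bw n x) + sc n p * (\<Sum>x\<in>{- int n..int n}. nu n x * real_of_int x ^ 0)"
    unfolding ww_def by (simp add: sum.distrib sum_distrib_left)
  also have "\<dots> = 1" using bw_sum[OF n] nu_moment[of 0 n] n by simp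
  finally show ?thesis .
qed

lemma ww_sym:
  assumes "1 \<le> X" "X \<le> int n"
  shows "ww n p X = ww n p (- X)"
proof -
  have e1: "nat (X + int n) = nat (- X + int n) + 2 * nat X" using assms by simp
  have e2: "nat (- X + int n) = 2*n - nat (X + int n)" using assms by simp
  have c: "(2*n choose nat (X + int n)) = (2*n choose nat (- X + int n))"
    unfolding e2 by (rule binomial_symmetric) (use assms in simp)
  have s: "(-1::real)^nat (X + int n) = (-1)^nat (- X + int n)"
    unfolding e1 by (simp add: power_add power_mult)
  have p: "pm1 X = pm1 (- X)" unfolding pm1_def using assms by auto
  show ?thesis unfolding ww_def bw_def nu_def using c s p assms by simp
qed

lemma ww_moment:
  assumes "n \<ge> 1" "k \<le> n"
  shows "(\<Sum>x\<in>{- int n..int n}. real_of_int x ^ k * ww n p x) = (\<Sum>x\<in>{- int n..int n}. real_of_int x ^ k * bw n x)"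
proof -
  have "(\<Sum>x\<in>{- int n..int n}. real_of_int x ^ k * ww n p x) = (\<Sum>x\<in>{- int n..int n}. real_of_int x ^ k * bw n x) + sc n p * (\<Sum>x\<in>{- int n..int n}. nu n x * real_of_int x ^ k)"
    unfolding ww_def by (simp add: sum.distrib sum_distrib_left algebra_simps)
  also have "(\<Sum>x\<in>{- int n..int n}. nu n x * real_of_int x ^ k) = 0" using assms by (intro nu_moment) simp
  finally show ?thesis by simp
qed


theorem mainTheorem6:
  shows "\<exists>C c::real. C > 0 \<and> c > 0 \<and>
    (\<forall>K::nat. K \<ge> 1 \<longrightarrow>
      (\<exists>(\<alpha>::real) (\<beta>::real) (R::nat) (D::real \<Rightarrow> int pmf).
         0 \<le> \<alpha> \<and> \<alpha> < \<beta> \<and> \<beta> \<le> 1 \<and>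
         real R \<le> C * (real K)^2 \<and>
         (\<forall>p\<in>{\<alpha>..\<beta>}. set_pmf (D p) \<subseteq> {- int R..int R}) \<and>
         (\<forall>p\<in>{\<alpha>..\<beta>}. pmf (D p) 0 = p \<and> pmf (D p) 1 \<ge> c) \<and>
         (\<forall>p\<in>{\<alpha>..\<beta>}. \<forall>X\<in>{1..int R}. pmf (D p) X = pmf (D p) (- X)) \<and>
         (\<forall>p\<in>{\<alpha>..\<beta>}. \<forall>q\<in>{\<alpha>..\<beta>}. \<forall>k\<in>{1..K}.
            measure_pmf.expectation (D p) (\<lambda>X. real_of_int X ^ k) =
            measure_pmf.expectation (D q) (\<lambda>X. real_of_int X ^ k))))"
proof (rule exI[of _ 1], rule exI[of _ "1/4"], intro conjI allI impI)
  fix K :: nat assume K: "K \<ge> 1"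
  define n where "n = K"
  have n: "n \<ge> 1" using K n_def by simp
  define \<beta> where "\<beta> = real (2*n choose n) / 4^n"
  define D where "D = (\<lambda>p. embed_pmf (ww n p))"
  define S where "S = {- int n..int n}"
  have \<beta>pos: "\<beta> > 0" unfolding \<beta>_def by simp
  have \<beta>le: "\<beta> \<le> 1"
  proof -
    have "real (2*n choose n) \<le> 2^(2*n)" using binomial_le_pow2[of "2*n" n] by (metis of_nat_le_iff of_nat_numeral of_nat_power)
    also have "(2::real)^(2*n) = 4^n" by (simp add: power_mult)
    finally show ?thesis unfolding \<beta>_def by simp
  qed
  have pmfD: "pmf (D p) x = ww n p x" if p: "p \<in> {0..\<beta>}" for p x
  proof -
    have nn: "\<forall>x. 0 \<le> ww n p x" using ww_ge[of p n] pm1_nonneg p unfolding \<beta>_def by (meson atLeastAtMost_iff order_trans)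
    have "(\<integral>\<^sup>+x. ennreal (ww n p x) \<partial>count_space UNIV) = (\<Sum>x\<in>S. ennreal (ww n p x))"
      by (rule nn_integral_count_space') (use ww_out[OF n] in \<open>auto simp: S_def\<close>)
    also have "\<dots> = ennreal (\<Sum>x\<in>S. ww n p x)" using nn by (simp add: sum_ennreal)
    also have "\<dots> = 1" using ww_sum[OF n] by (simp add: S_def)
    finally show ?thesis unfolding D_def using nn by (simp add: pmf_embed_pmf)
  qed
  have setD: "set_pmf (D p) \<subseteq> S" if p: "p \<in> {0..\<beta>}" for p
  proof
    fix x assume "x \<in> set_pmf (D p)"
    then have "ww n p x \<noteq> 0" using pmfD[OF p] by (simp add: set_pmf_eq)
    then show "x \<in> S" using ww_out[OF n, of x p] unfolding S_def by blast
  qed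
  have expD: "measure_pmf.expectation (D p) (\<lambda>X. real_of_int X ^ k) = (\<Sum>x\<in>S. real_of_int x ^ k * bw n x)"
    if p: "p \<in> {0..\<beta>}" and k: "k \<le> n" for p k
  proof -
    have "measure_pmf.expectation (D p) (\<lambda>X. real_of_int X ^ k) = (\<Sum>x\<in>S. real_of_int x ^ k * pmf (D p) x)"
      by (rule integral_measure_pmf_real) (use setD[OF p] in \<open>auto simp: S_def\<close>)
    also have "\<dots> = (\<Sum>x\<in>S. real_of_int x ^ k * ww n p x)" using pmfD[OF p] by simp
    also have "\<dots> = (\<Sum>x\<in>S. real_of_int x ^ k * bw n x)" unfolding S_def by (rule ww_moment[OF n k])
    finally show ?thesis .
  qed
  show "\<exists>(\<alpha>::real) (\<beta>::real) (R::nat) (D::real \<Rightarrow> int pmf).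
         0 \<le> \<alpha> \<and> \<alpha> < \<beta> \<and> \<beta> \<le> 1 \<and>
         real R \<le> 1 * (real K)^2 \<and>
         (\<forall>p\<in>{\<alpha>..\<beta>}. set_pmf (D p) \<subseteq> {- int R..int R}) \<and>
         (\<forall>p\<in>{\<alpha>..\<beta>}. pmf (D p) 0 = p \<and> pmf (D p) 1 \<ge> 1/4) \<and>
         (\<forall>p\<in>{\<alpha>..\<beta>}. \<forall>X\<in>{1..int R}. pmf (D p) X = pmf (D p) (- X)) \<and>
         (\<forall>p\<in>{\<alpha>..\<beta>}. \<forall>q\<in>{\<alpha>..\<beta>}. \<forall>k\<in>{1..K}.
            measure_pmf.expectation (D p) (\<lambda>X. real_of_int X ^ k) =
            measure_pmf.expectation (D q) (\<lambda>X. real_of_int X ^ k))"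
  proof (rule exI[of _ 0], rule exI[of _ \<beta>], rule exI[of _ n], rule exI[of _ D], intro conjI ballI)
    show "0 \<le> (0::real)" by simp
    show "0 < \<beta>" by (rule \<beta>pos)
    show "\<beta> \<le> 1" by (rule \<beta>le)
    have "real K \<le> real K ^ 2" using K by (simp add: power2_eq_square)
    then show "real n \<le> 1 * real K ^ 2" using n_def by simp
  next
    fix p assume p: "p \<in> {0..\<beta>}"
    show "set_pmf (D p) \<subseteq> {- int n..int n}" using setD[OF p] by (simp add: S_def)
    show "pmf (D p) 0 = p" using pmfD[OF p] ww0 by simp
    have "pm1 1 \<le> ww n p 1" using ww_ge[of p n] p unfolding \<beta>_def by simp
    then show "pmf (D p) 1 \<ge> 1/4" using pmfD[OF p] by (simp add: pm1_def)
  next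
    fix p X assume p: "p \<in> {0..\<beta>}" and X: "X \<in> {1..int n}"
    show "pmf (D p) X = pmf (D p) (- X)" using pmfD[OF p] ww_sym[of X n p] X by simp
  next
    fix p q k assume p: "p \<in> {0..\<beta>}" and q: "q \<in> {0..\<beta>}" and k: "k \<in> {1..K}"
    show "measure_pmf.expectation (D p) (\<lambda>X. real_of_int X ^ k) = measure_pmf.expectation (D q) (\<lambda>X. real_of_int X ^ k)"
      using expD[OF p] expD[OF q] k n_def by simp
  qed
qed simp_all

end
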